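(* For any finite simple graph $G$ of order $n$ with $v_{even}(G)>0$, there is $f\in\mathrm{SEDF}^0(G)$ such that $f(G)\le n-2+v_{even}(G)$; hence $\gamma_s'(G)\le n-2+v_{even}(G)$.
   Context: For $f:E(G)\to\{1,-1\}$, $f(G)=\sum_{e\in E(G)}f(e)$ and $f(v)=\sum_{e\in E_G(v)}f(e)$, where $E_G(v)$ is the set of edges incident with $v$. $\mathrm{SEDF}^0(G)$ is the set of functions $f:E(G)\to\{1,-1\}$ such that (a) $f(v)\ge 0$ for all $v\in V(G)$, and (b) $f(u)+f(v)\ge 2$ for every edge $uv$ with $f(uv)=1$. A signed edge domination function (SEDF) is $f:E(G)\to\{1,-1\}$ with $\sum_{e'\in E_G(u)\cup E_G(v)}f(e')\ge1$ for every edge $uv$; $\gamma_s'(G)$ is the minimum of $f(G)$ over all SEDFs. $v_{even}(G)$ is the number of vertices of even degree in $G$. *)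

theory Defs
  imports Main
begin

definition simple_graph :: "'a set \<Rightarrow> 'a set set \<Rightarrow> bool" where
  "simple_graph V E \<longleftrightarrow> finite V \<and> (\<forall>e\<in>E. \<exists>u v. u \<noteq> v \<and> u \<in> V \<and> v \<in> V \<and> e = {u, v})"

definition inc_edges :: "'a set set \<Rightarrow> 'a \<Rightarrow> 'a set set" where
  "inc_edges E v = {e \<in> E. v \<in> e}"

definition degree :: "'a set set \<Rightarrow> 'a \<Rightarrow> nat" where
  "degree E v = card (inc_edges E v)"

definition v_even :: "'a set \<Rightarrow> 'a set set \<Rightarrow> nat" where
  "v_even V E = card {v \<in> V. even (degree E v)}"

definition fG :: "'a set set \<Rightarrow> ('a set \<Rightarrow> int) \<Rightarrow> int" where
  "fG E f = (\<Sum>e\<in>E. f e)"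

definition fv :: "'a set set \<Rightarrow> ('a set \<Rightarrow> int) \<Rightarrow> 'a \<Rightarrow> int" where
  "fv E f v = (\<Sum>e\<in>inc_edges E v. f e)"

definition signed_edge_fun :: "'a set set \<Rightarrow> ('a set \<Rightarrow> int) \<Rightarrow> bool" where
  "signed_edge_fun E f \<longleftrightarrow> (\<forall>e\<in>E. f e = 1 \<or> f e = -1)"

definition SEDF0 :: "'a set \<Rightarrow> 'a set set \<Rightarrow> ('a set \<Rightarrow> int) \<Rightarrow> bool" where
  "SEDF0 V E f \<longleftrightarrow> signed_edge_fun E f
     \<and> (\<forall>v\<in>V. fv E f v \<ge> 0)
     \<and> (\<forall>u v. {u, v} \<in> E \<and> f {u, v} = 1 \<longrightarrow> fv E f u + fv E f v \<ge> 2)"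

definition SEDF :: "'a set set \<Rightarrow> ('a set \<Rightarrow> int) \<Rightarrow> bool" where
  "SEDF E f \<longleftrightarrow> signed_edge_fun E f
     \<and> (\<forall>u v. {u, v} \<in> E \<longrightarrow> (\<Sum>e\<in>inc_edges E u \<union> inc_edges E v. f e) \<ge> 1)"

text \<open>Signed edge domination number: minimum of f(G) over all SEDFs.
  Only values on E matter, so the set of values is finite.\<close>
definition gamma_s' :: "'a set set \<Rightarrow> int" where
  "gamma_s' E = Min {fG E f | f. SEDF E f}"

end

theory Submission
  imports Defs
begin



definition mdeg :: "'e set \<Rightarrow> ('e \<Rightarrow> 'v set) \<Rightarrow> 'v \<Rightarrow> nat" where
  "mdeg E ends v = card {e\<in>E. v \<in> ends e}"
definition madj :: "'e set \<Rightarrow> ('e \<Rightarrow> 'v set) \<Rightarrow> ('v \<times> 'v) set" where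
  "madj E ends = {(u,v). \<exists>e\<in>E. u \<in> ends e \<and> v \<in> ends e}"
definition mreach :: "'e set \<Rightarrow> ('e \<Rightarrow> 'v set) \<Rightarrow> 'v \<Rightarrow> 'v set" where
  "mreach E ends w = {v. (w,v) \<in> (madj E ends)\<^sup>*}"

lemma mreach_refl: "w \<in> mreach E ends w"
  by (simp add: mreach_def)

lemma mreach_step: "u \<in> mreach E ends w \<Longrightarrow> e \<in> E \<Longrightarrow> u \<in> ends e \<Longrightarrow> v \<in> ends e \<Longrightarrow> v \<in> mreach E ends w"
  unfolding mreach_def madj_def
  by (auto intro: rtrancl_into_rtrancl)

lemma mreach_sym: assumes "v \<in> mreach E ends w" shows "w \<in> mreach E ends v"
proof -
  have s: "(madj E ends)\<inverse> = madj E ends" unfolding madj_def by auto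
  have "(w,v) \<in> (madj E ends)\<^sup>*" using assms by (simp add: mreach_def)
  hence "(v,w) \<in> ((madj E ends)\<inverse>)\<^sup>*" by (simp add: rtrancl_converse)
  thus ?thesis using s by (simp add: mreach_def)
qed

lemma mreach_closed:
  assumes "w \<in> S" and "\<And>e u. e \<in> E \<Longrightarrow> u \<in> ends e \<Longrightarrow> u \<in> S \<Longrightarrow> ends e \<subseteq> S"
  shows "mreach E ends w \<subseteq> S"
proof
  fix v assume "v \<in> mreach E ends w"
  hence "(w,v) \<in> (madj E ends)\<^sup>*" by (simp add: mreach_def)
  thus "v \<in> S"
  proof (induction rule: rtrancl_induct)
    case base then show ?case using assms(1) .
  next
    case (step y z)
    then obtain e where "e \<in> E" "y \<in> ends e" "z \<in> ends e" by (auto simp: madj_def)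
    thus ?case using assms(2) step.IH by blast
  qed
qed

lemma mreach_mono:
  assumes "E1 \<subseteq> E2" and "\<And>e. e \<in> E1 \<Longrightarrow> ends1 e = ends2 e"
  shows "mreach E1 ends1 w \<subseteq> mreach E2 ends2 w"
proof -
  have "madj E1 ends1 \<subseteq> madj E2 ends2" using assms unfolding madj_def by fastforce
  hence "(madj E1 ends1)\<^sup>* \<subseteq> (madj E2 ends2)\<^sup>*" by (rule rtrancl_mono)
  thus ?thesis unfolding mreach_def by auto
qed

lemma mreach_sub: "mreach E ends a \<subseteq> insert a (\<Union>(ends ` E))"
  by (rule mreach_closed) auto

lemma double_count:
  assumes "finite E" "finite C"
  shows "(\<Sum>v\<in>C. mdeg E ends v) = (\<Sum>e\<in>E. card (ends e \<inter> C))"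
proof -
  have "(\<Sum>v\<in>C. mdeg E ends v) = (\<Sum>v\<in>C. \<Sum>e\<in>E. if v \<in> ends e then 1 else 0)"
    unfolding mdeg_def using assms by (simp add: sum.If_cases Int_def)
  also have "\<dots> = (\<Sum>e\<in>E. \<Sum>v\<in>C. if v \<in> ends e then 1 else 0)" by (rule sum.swap)
  also have "\<dots> = (\<Sum>e\<in>E. card (ends e \<inter> C))"
    using assms by (simp add: sum.If_cases Int_commute)
  finally show ?thesis .
qed

lemma parity_reach:
  assumes fin: "finite E" and c2: "\<forall>e\<in>E. card (ends e) = 2"
    and oa: "odd (mdeg E ends a)"
    and ev: "\<And>v. v \<noteq> a \<Longrightarrow> v \<noteq> w \<Longrightarrow> even (mdeg E ends v)"
  shows "a \<in> mreach E ends w"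
proof (rule ccontr)
  assume na: "a \<notin> mreach E ends w"
  define C where "C = mreach E ends a"
  have wC: "w \<notin> C" using na mreach_sym unfolding C_def by fastforce
  have aC: "a \<in> C" unfolding C_def by (rule mreach_refl)
  have finends: "\<forall>e\<in>E. finite (ends e)" using c2 by (metis card.infinite zero_neq_numeral)
  have finC: "finite C" unfolding C_def
    by (rule finite_subset[OF mreach_sub]) (use fin finends in auto)
  have "(\<Sum>v\<in>C. mdeg E ends v) = (\<Sum>e\<in>E. card (ends e \<inter> C))"
    by (rule double_count[OF fin finC])
  moreover have "even (\<Sum>e\<in>E. card (ends e \<inter> C))"
  proof (rule dvd_sum)
    fix e assume eE: "e \<in> E"
    show "even (card (ends e \<inter> C))"
    proof (cases "ends e \<inter> C = {}")
      case True then show ?thesis by simp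
    next
      case False
      then obtain u where "u \<in> ends e" "u \<in> C" by auto
      hence "ends e \<subseteq> C" using eE mreach_step unfolding C_def by fast
      hence "ends e \<inter> C = ends e" by auto
      thus ?thesis using c2 eE by simp
    qed
  qed
  moreover have "odd (\<Sum>v\<in>C. mdeg E ends v)"
  proof -
    have "(\<Sum>v\<in>C. mdeg E ends v) = mdeg E ends a + (\<Sum>v\<in>C-{a}. mdeg E ends v)"
      using finC aC by (simp add: sum.remove)
    moreover have "even (\<Sum>v\<in>C-{a}. mdeg E ends v)"
      by (rule dvd_sum) (use ev wC in blast)
    ultimately show ?thesis using oa by simp
  qed
  ultimately show False by simp
qed

lemma separation:
  assumes "a \<in> mreach F ends w" "e \<in> F" "e' \<in> F" "e \<noteq> e'" "a \<in> ends e" "a \<in> ends e'"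
  shows "a \<in> mreach (F - {e}) ends w \<or> a \<in> mreach (F - {e'}) ends w"
proof (rule ccontr)
  assume H: "\<not> ?thesis"
  define R where "R = mreach (F - {e, e'}) ends w"
  have R1: "R \<subseteq> mreach (F - {e}) ends w" unfolding R_def by (rule mreach_mono) auto
  have R2: "R \<subseteq> mreach (F - {e'}) ends w" unfolding R_def by (rule mreach_mono) auto
  have "mreach F ends w \<subseteq> R"
  proof (rule mreach_closed)
    show "w \<in> R" unfolding R_def by (rule mreach_refl)
  next
    fix g u assume g: "g \<in> F" "u \<in> ends g" "u \<in> R"
    show "ends g \<subseteq> R"
    proof (cases "g = e")
      case True
      have "u \<in> mreach (F - {e'}) ends w" using g R2 by auto
      hence "a \<in> mreach (F - {e'}) ends w" using mreach_step[of u "F - {e'}" ends w e a] g True assms by auto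
      thus ?thesis using H by auto
    next
      case False
      show ?thesis
      proof (cases "g = e'")
        case True
        have "u \<in> mreach (F - {e}) ends w" using g R1 by auto
        hence "a \<in> mreach (F - {e}) ends w" using mreach_step[of u "F - {e}" ends w e' a] g True assms by auto
        thus ?thesis using H by auto
      next
        case False
        have "g \<in> F - {e, e'}" using g `g \<noteq> e` False by auto
        thus ?thesis using g mreach_step unfolding R_def by fast
      qed
    qed
  qed
  hence "a \<in> R" using assms(1) by auto
  thus False using R1 H by auto
qed

lemma card2_other: assumes "card S = 2" "x \<in> S" obtains y where "S = {x, y}" "y \<noteq> x"
proof -
  obtain p q where "S = {p,q}" "p \<noteq> q" using assms(1) card_2_iff by metis
  thus ?thesis using that assms(2) by auto
qed

lemma bll:
  assumes "finite E" "\<forall>e\<in>E. card (ends e) = 2"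
    "\<forall>v. v \<noteq> w \<longrightarrow> even (mdeg E ends v)"
    "\<forall>e\<in>E. ends e \<subseteq> mreach E ends w"
  shows "\<exists>l. (\<forall>e\<in>E. l e = 1 \<or> l e = -1) \<and> (\<forall>v. v \<noteq> w \<longrightarrow> (\<Sum>e\<in>{e\<in>E. v \<in> ends e}. l e) = (0::int))"
  using assms
proof (induction "card E" arbitrary: E ends rule: less_induct)
  case less
  note fin = less.prems(1) and c2 = less.prems(2) and ev = less.prems(3) and rc = less.prems(4)
  show ?case
  proof (cases "E = {}")
    case True then show ?thesis by (intro exI[of _ "\<lambda>_. 1"]) auto
  next
    case False
    then obtain e0 where e0: "e0 \<in> E" by auto
    then obtain v0 where v0: "v0 \<in> ends e0" using c2 by (metis all_not_in_conv card.empty zero_neq_numeral)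
    have "(w, v0) \<in> (madj E ends)\<^sup>*" using rc e0 v0 by (auto simp: mreach_def)
    then obtain e1 where e1: "e1 \<in> E" "w \<in> ends e1"
    proof (cases rule: converse_rtranclE)
      case base then show ?thesis using that e0 v0 by auto
    next
      case (step y) then show ?thesis using that by (auto simp: madj_def)
    qed
    obtain a where a: "ends e1 = {w, a}" "a \<noteq> w" using card2_other c2 e1 by metis
    define F where "F = E - {e1}"
    have finF: "finite F" using fin by (simp add: F_def)
    have setF: "\<And>v. {e\<in>F. v \<in> ends e} = {e\<in>E. v \<in> ends e} - {e1}" by (auto simp: F_def)
    have degFa: "mdeg F ends a = mdeg E ends a - 1"
      unfolding mdeg_def setF using e1 a fin by (simp add: card_Diff_singleton)
    have degEa: "mdeg E ends a \<ge> 1"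
    proof -
      have "e1 \<in> {e\<in>E. a \<in> ends e}" using e1 a by auto
      thus ?thesis unfolding mdeg_def using fin by (metis (no_types, lifting) One_nat_def Suc_leI card_gt_0_iff empty_iff finite_subset mem_Collect_eq subsetI)
    qed
    have oddFa: "odd (mdeg F ends a)" using degFa degEa ev a by (simp add: even_diff_nat)
    have evF: "\<And>v. v \<noteq> a \<Longrightarrow> v \<noteq> w \<Longrightarrow> even (mdeg F ends v)"
    proof -
      fix v assume "v \<noteq> a" "v \<noteq> w"
      hence "{e\<in>F. v \<in> ends e} = {e\<in>E. v \<in> ends e}" using a by (auto simp: F_def)
      thus "even (mdeg F ends v)" using ev `v \<noteq> w` unfolding mdeg_def by simp
    qed
    have aF: "a \<in> mreach F ends w"
      by (rule parity_reach[OF finF _ oddFa evF]) (use c2 in \<open>auto simp: F_def\<close>)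
    obtain e2 where e2: "e2 \<in> F" "a \<in> ends e2" and e2c: "mdeg F ends a = 1 \<or> a \<in> mreach (F - {e2}) ends w"
    proof (cases "mdeg F ends a = 1")
      case True
      then obtain x where "{e\<in>F. a \<in> ends e} = {x}" unfolding mdeg_def using card_1_singletonE by blast
      thus ?thesis using that True by auto
    next
      case False
      hence "mdeg F ends a \<ge> 2" using oddFa by (cases "mdeg F ends a") auto
      hence "\<not> card {e\<in>F. a \<in> ends e} \<le> Suc 0" unfolding mdeg_def by simp
      then obtain x y where xy: "x \<in> {e\<in>F. a \<in> ends e}" "y \<in> {e\<in>F. a \<in> ends e}" "x \<noteq> y"
        using card_le_Suc0_iff_eq[of "{e\<in>F. a \<in> ends e}"] finF by auto
      show ?thesis using separation[OF aF, of x y] xy that by auto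
    qed
    have e12: "e1 \<noteq> e2" using e2 by (auto simp: F_def)
    have e2E: "e2 \<in> E" using e2 by (auto simp: F_def)
    obtain b where b: "ends e2 = {a, b}" "b \<noteq> a" using card2_other c2 e2E e2 by metis
    have keya: "\<And>g. g \<in> F - {e2} \<Longrightarrow> a \<in> ends g \<Longrightarrow> a \<in> mreach (F - {e2}) ends w"
    proof -
      fix g assume g: "g \<in> F - {e2}" "a \<in> ends g"
      have "{e2, g} \<subseteq> {e\<in>F. a \<in> ends e}" using g e2 by auto
      hence "card {e2, g} \<le> mdeg F ends a" unfolding mdeg_def using finF by (simp add: card_mono)
      hence "mdeg F ends a \<noteq> 1" using g by auto
      thus "a \<in> mreach (F - {e2}) ends w" using e2c by auto
    qed
    show ?thesis
    proof (cases "b = w")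
      case True
      define E' where "E' = F - {e2}"
      have cardlt: "card E' < card E" unfolding E'_def F_def using fin e1 e2E e12
        by (metis Diff_insert2 card_Diff2_less)
      have ev': "\<forall>v. v \<noteq> w \<longrightarrow> even (mdeg E' ends v)"
      proof (intro allI impI)
        fix v assume vw: "v \<noteq> w"
        show "even (mdeg E' ends v)"
        proof (cases "v = a")
          case True
          have "{e\<in>E'. a \<in> ends e} = {e\<in>E. a \<in> ends e} - {e1, e2}" by (auto simp: E'_def F_def)
          hence "mdeg E' ends a = mdeg E ends a - 2" unfolding mdeg_def using e1 e2 a b fin e12 e2E
            by (simp add: card_Diff_subset) 
          moreover have "mdeg E ends a \<ge> 2" using degEa ev a by (metis One_nat_def Suc_1 Suc_leI le_neq_implies_less odd_one)
          ultimately show ?thesis using ev a True by (simp add: even_diff_nat)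
        next
          case False
          hence "{e\<in>E'. v \<in> ends e} = {e\<in>E. v \<in> ends e}" using a b True vw by (auto simp: E'_def F_def)
          thus ?thesis using ev vw unfolding mdeg_def by simp
        qed
      qed
      have rc': "\<forall>e\<in>E'. ends e \<subseteq> mreach E' ends w"
      proof -
        have S: "mreach E ends w \<subseteq> insert a (mreach E' ends w)"
        proof (rule mreach_closed)
          show "w \<in> insert a (mreach E' ends w)" by (simp add: mreach_refl)
        next
          fix g u assume g: "g \<in> E" "u \<in> ends g" "u \<in> insert a (mreach E' ends w)"
          show "ends g \<subseteq> insert a (mreach E' ends w)"
          proof (cases "g = e1 \<or> g = e2")
            case True then show ?thesis using a b `b = w` by (auto simp: mreach_refl)
          next
            case False
            hence gE': "g \<in> E'" using g by (auto simp: E'_def F_def)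
            have "u \<in> mreach E' ends w"
            proof (cases "u = a")
              case True then show ?thesis using keya gE' g unfolding E'_def by auto
            next
              case False then show ?thesis using g by auto
            qed
            thus ?thesis using gE' g mreach_step by fast
          qed
        qed
        show ?thesis
        proof (intro ballI subsetI)
          fix e v assume ev': "e \<in> E'" "v \<in> ends e"
          hence "v \<in> insert a (mreach E' ends w)" using S rc by (auto simp: E'_def F_def)
          moreover have "v = a \<Longrightarrow> v \<in> mreach E' ends w" using keya ev' unfolding E'_def by auto
          ultimately show "v \<in> mreach E' ends w" by auto
        qed
      qed
      obtain l' where l': "\<forall>e\<in>E'. l' e = 1 \<or> l' e = -1" "\<forall>v. v \<noteq> w \<longrightarrow> (\<Sum>e\<in>{e\<in>E'. v \<in> ends e}. l' e) = (0::int)"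
      proof -
        have "finite E'" "\<forall>e\<in>E'. card (ends e) = 2" using fin c2 by (auto simp: E'_def F_def)
        thus ?thesis using less.hyps[OF cardlt \<open>finite E'\<close> _ ev' rc'] that by blast
      qed
      define l where "l = l'(e1 := 1, e2 := -1)"
      have "\<forall>e\<in>E. l e = 1 \<or> l e = -1" using l' by (auto simp: l_def E'_def F_def)
      moreover have "\<forall>v. v \<noteq> w \<longrightarrow> (\<Sum>e\<in>{e\<in>E. v \<in> ends e}. l e) = 0"
      proof (intro allI impI)
        fix v assume vw: "v \<noteq> w"
        have fin': "finite {e\<in>E'. v \<in> ends e}" using fin by (auto simp: E'_def F_def)
        have eqE': "(\<Sum>e\<in>{e\<in>E'. v \<in> ends e}. l e) = 0"
        proof -
          have "(\<Sum>e\<in>{e\<in>E'. v \<in> ends e}. l e) = (\<Sum>e\<in>{e\<in>E'. v \<in> ends e}. l' e)"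
            by (rule sum.cong) (auto simp: l_def E'_def F_def)
          thus ?thesis using l' vw by simp
        qed
        show "(\<Sum>e\<in>{e\<in>E. v \<in> ends e}. l e) = 0"
        proof (cases "v = a")
          case True
          have "{e\<in>E. v \<in> ends e} = insert e1 (insert e2 {e\<in>E'. v \<in> ends e})"
            using True e1 e2E a b by (auto simp: E'_def F_def)
          moreover have "e1 \<notin> insert e2 {e\<in>E'. v \<in> ends e}" "e2 \<notin> {e\<in>E'. v \<in> ends e}"
            using e12 by (auto simp: E'_def F_def)
          ultimately show ?thesis using fin' eqE' e12 by (simp add: l_def)
        next
          case False
          hence "{e\<in>E. v \<in> ends e} = {e\<in>E'. v \<in> ends e}" using a b `b = w` vw by (auto simp: E'_def F_def)
          thus ?thesis using eqE' by simp
        qed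
      qed
      ultimately show ?thesis by blast
    next
      case False
      define ends' where "ends' = ends(e2 := {w, b})"
      have cardlt: "card F < card E" unfolding F_def using fin e1 by (meson card_Diff1_less)
      have c2': "\<forall>e\<in>F. card (ends' e) = 2" using c2 False by (auto simp: ends'_def F_def)
      have setv: "\<And>v. v \<noteq> a \<Longrightarrow> v \<noteq> w \<Longrightarrow> {e\<in>F. v \<in> ends' e} = {e\<in>E. v \<in> ends e}"
        using a b e2 e1 by (auto simp: ends'_def F_def)
      have seta: "{e\<in>F. a \<in> ends' e} = {e\<in>E. a \<in> ends e} - {e1, e2}"
        using a b e2 e1 False by (auto simp: ends'_def F_def)
      have ev': "\<forall>v. v \<noteq> w \<longrightarrow> even (mdeg F ends' v)"
      proof (intro allI impI)
        fix v assume vw: "v \<noteq> w"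
        show "even (mdeg F ends' v)"
        proof (cases "v = a")
          case True
          have "mdeg F ends' a = mdeg E ends a - 2" unfolding mdeg_def seta using e1 e2 a b fin e12 e2E
            by (simp add: card_Diff_subset) 
          moreover have "mdeg E ends a \<ge> 2" using degEa ev a by (metis One_nat_def Suc_1 Suc_leI le_neq_implies_less odd_one)
          ultimately show ?thesis using ev a True by (simp add: even_diff_nat)
        next
          case False
          thus ?thesis using ev vw setv unfolding mdeg_def by simp
        qed
      qed
      have mono2: "mreach (F - {e2}) ends w \<subseteq> mreach F ends' w"
        by (rule mreach_mono) (auto simp: ends'_def)
      have bR: "b \<in> mreach F ends' w" using mreach_step[of w F ends' w e2 b] mreach_refl[of w F ends'] e2
        by (auto simp: ends'_def)
      have rc': "\<forall>e\<in>F. ends' e \<subseteq> mreach F ends' w"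
      proof -
        have S: "mreach E ends w \<subseteq> insert a (mreach F ends' w)"
        proof (rule mreach_closed)
          show "w \<in> insert a (mreach F ends' w)" by (simp add: mreach_refl)
        next
          fix g u assume g: "g \<in> E" "u \<in> ends g" "u \<in> insert a (mreach F ends' w)"
          show "ends g \<subseteq> insert a (mreach F ends' w)"
          proof (cases "g = e1 \<or> g = e2")
            case True then show ?thesis using a b bR by (auto simp: mreach_refl)
          next
            case False
            hence gF: "g \<in> F - {e2}" and eqg: "ends' g = ends g" using g by (auto simp: F_def ends'_def)
            have "u \<in> mreach F ends' w"
            proof (cases "u = a")
              case True then show ?thesis using keya gF g mono2 by auto
            next
              case False then show ?thesis using g by auto
            qed
            thus ?thesis using gF g mreach_step[of u F ends' w g] eqg by auto
          qed
        qed
        show ?thesis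
        proof (intro ballI subsetI)
          fix e v assume ev': "e \<in> F" "v \<in> ends' e"
          show "v \<in> mreach F ends' w"
          proof (cases "e = e2")
            case True then show ?thesis using ev' bR by (auto simp: ends'_def mreach_refl)
          next
            case False
            hence eq: "ends' e = ends e" by (simp add: ends'_def)
            hence "v \<in> insert a (mreach F ends' w)" using S rc ev' by (auto simp: F_def)
            moreover have "v = a \<Longrightarrow> v \<in> mreach F ends' w" using keya ev' eq False mono2 by auto
            ultimately show ?thesis by auto
          qed
        qed
      qed
      obtain l' where l': "\<forall>e\<in>F. l' e = 1 \<or> l' e = -1" "\<forall>v. v \<noteq> w \<longrightarrow> (\<Sum>e\<in>{e\<in>F. v \<in> ends' e}. l' e) = (0::int)"
        using less.hyps[OF cardlt finF c2' ev' rc'] by auto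
      define l where "l = l'(e1 := - l' e2)"
      have "\<forall>e\<in>E. l e = 1 \<or> l e = -1" using l' e2 by (auto simp: l_def F_def)
      moreover have "\<forall>v. v \<noteq> w \<longrightarrow> (\<Sum>e\<in>{e\<in>E. v \<in> ends e}. l e) = 0"
      proof (intro allI impI)
        fix v assume vw: "v \<noteq> w"
        have sl: "\<And>A. A \<subseteq> F \<Longrightarrow> (\<Sum>e\<in>A. l e) = (\<Sum>e\<in>A. l' e)"
          by (rule sum.cong) (auto simp: l_def F_def)
        show "(\<Sum>e\<in>{e\<in>E. v \<in> ends e}. l e) = 0"
        proof (cases "v = a")
          case True
          define A where "A = {e\<in>F. a \<in> ends' e}"
          have finA: "finite A" using finF by (simp add: A_def)
          have "{e\<in>E. v \<in> ends e} = insert e1 (insert e2 A)"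
            using True e1 e2E a b by (auto simp: A_def F_def ends'_def)
          moreover have "e1 \<notin> insert e2 A" "e2 \<notin> A"
            using e12 False a b by (auto simp: A_def F_def ends'_def)
          ultimately have "(\<Sum>e\<in>{e\<in>E. v \<in> ends e}. l e) = l e1 + l e2 + (\<Sum>e\<in>A. l e)"
            using finA by simp
          also have "\<dots> = (\<Sum>e\<in>A. l' e)" using sl[of A] e12 by (auto simp: l_def A_def)
          also have "\<dots> = 0" using l' a unfolding A_def by auto
          finally show ?thesis .
        next
          case False
          hence "{e\<in>E. v \<in> ends e} = {e\<in>F. v \<in> ends' e}" using setv vw by auto
          thus ?thesis using sl[of "{e\<in>F. v \<in> ends' e}"] l' vw by auto
        qed
      qed
      ultimately show ?thesis by blast
    qed
  qed
qed



lemma sg_edge: assumes "simple_graph V E" "e \<in> E" obtains a b where "e = {a,b}" "a \<noteq> b" "a \<in> V" "b \<in> V"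
proof -
  have "\<forall>e\<in>E. \<exists>u v. u \<noteq> v \<and> u \<in> V \<and> v \<in> V \<and> e = {u, v}" using assms(1) unfolding simple_graph_def by (rule conjunct2)
  hence "\<exists>u v. u \<noteq> v \<and> u \<in> V \<and> v \<in> V \<and> e = {u, v}" using assms(2) by (rule bspec)
  then obtain u v where "u \<noteq> v \<and> u \<in> V \<and> v \<in> V \<and> e = {u, v}" by (elim exE)
  thus ?thesis using that by simp
qed

lemma sg_finE: assumes "simple_graph V E" shows "finite E"
proof -
  have "E \<subseteq> Pow V" using sg_edge[OF assms] by (metis PowI insert_subset empty_subsetI subsetI)
  moreover have "finite V" using assms unfolding simple_graph_def by (rule conjunct1)
  ultimately show ?thesis by (meson finite_Pow_iff finite_subset)
qed


lemma handshake:
  assumes sg: "simple_graph V E"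
  shows "(\<Sum>u\<in>V. \<Sum>e\<in>inc_edges E u. g e) = 2 * (\<Sum>e\<in>E. (g e :: int))"
proof -
  have finV: "finite V" using sg unfolding simple_graph_def by (rule conjunct1)
  have finE: "finite E" using sg_finE[OF sg] .
  have "(\<Sum>u\<in>V. \<Sum>e\<in>inc_edges E u. g e) = (\<Sum>u\<in>V. \<Sum>e\<in>{e\<in>E. u \<in> e}. g e)"
    unfolding inc_edges_def by simp
  also have "\<dots> = (\<Sum>e\<in>E. \<Sum>u\<in>{u\<in>V. u \<in> e}. g e)"
    by (rule sum.swap_restrict[OF finV finE])
  also have "\<dots> = (\<Sum>e\<in>E. 2 * g e)"
  proof (rule sum.cong[OF refl])
    fix e assume "e \<in> E"
    then obtain a b where ab: "e = {a,b}" "a \<noteq> b" "a \<in> V" "b \<in> V" using sg_edge[OF sg] by metis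
    have "{u\<in>V. u \<in> e} = {a,b}" using ab by auto
    thus "(\<Sum>u\<in>{u\<in>V. u \<in> e}. g e) = 2 * g e" using ab by simp
  qed
  also have "\<dots> = 2 * (\<Sum>e\<in>E. g e)" by (simp add: sum_distrib_left)
  finally show ?thesis .
qed

lemma inc_fin: assumes "simple_graph V E" shows "finite (inc_edges E u)"
  using sg_finE[OF assms] unfolding inc_edges_def by auto

lemma sum_pm:
  assumes "finite A" "\<forall>e\<in>A. g e = 1 \<or> g e = (-1::int)"
  shows "(\<Sum>e\<in>A. g e) = int (card {e\<in>A. g e = 1}) - int (card {e\<in>A. g e = -1})"
    and "card A = card {e\<in>A. g e = 1} + card {e\<in>A. g e = -1}"
proof -
  have A: "A = {e\<in>A. g e = 1} \<union> {e\<in>A. g e = -1}" using assms(2) by auto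
  have D: "{e\<in>A. g e = 1} \<inter> {e\<in>A. g e = -1} = {}" by auto
  have "(\<Sum>e\<in>A. g e) = (\<Sum>e\<in>{e\<in>A. g e = 1}. g e) + (\<Sum>e\<in>{e\<in>A. g e = -1}. g e)"
    by (subst A, rule sum.union_disjoint) (use assms(1) D in auto)
  thus "(\<Sum>e\<in>A. g e) = int (card {e\<in>A. g e = 1}) - int (card {e\<in>A. g e = -1})" by simp
  show "card A = card {e\<in>A. g e = 1} + card {e\<in>A. g e = -1}"
    by (subst A, rule card_Un_disjoint) (use assms(1) D in auto)
qed

lemma assemble:
  fixes V :: "'a set" and E :: "'a set set" and g :: "'a set \<Rightarrow> int" and c mu :: "'a \<Rightarrow> int"
  assumes sg: "simple_graph V E"
    and gv: "\<forall>e\<in>E. g e = 1 \<or> g e = -1"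
    and bal: "\<forall>u\<in>V. (\<Sum>e\<in>inc_edges E u. g e) = - c u"
    and mub: "\<forall>u\<in>V. 0 \<le> mu u \<and> mu u \<le> int (degree E u) \<and> (0 < degree E u \<longrightarrow> 1 \<le> mu u)"
    and cb: "\<forall>u\<in>V. - mu u \<le> c u \<and> even (mu u + c u)"
    and tot: "(\<Sum>u\<in>V. c u) \<le> 0"
    and sav: "sv \<longrightarrow> {r,y} \<in> E \<and> g {r,y} = -1 \<and> 2 \<le> mu r + c r \<and> 2 \<le> mu y + c y"
  shows "\<exists>f. SEDF0 V E f \<and> fG E f \<le> (\<Sum>u\<in>V. mu u) - (if sv then 2 else 0)"
proof -
  have finV: "finite V" using sg unfolding simple_graph_def by (rule conjunct1)
  have finE: "finite E" using sg_finE[OF sg] .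
  define Nn where "Nn u = {e\<in>inc_edges E u. g e = -1}" for u
  define k where "k u = nat ((mu u + c u) div 2)" for u
  have k2: "\<And>u. u \<in> V \<Longrightarrow> 2 * int (k u) = mu u + c u"
  proof -
    fix u assume uV: "u \<in> V"
    have e: "even (mu u + c u)" using cb uV by blast
    have p: "0 \<le> mu u + c u" using cb uV by fastforce
    have "int (k u) = (mu u + c u) div 2" unfolding k_def using p by simp
    thus "2 * int (k u) = mu u + c u" using dvd_mult_div_cancel[OF e] by simp
  qed
  have kle: "\<And>u. u \<in> V \<Longrightarrow> k u \<le> card (Nn u)"
  proof -
    fix u assume uV: "u \<in> V"
    have fi: "finite (inc_edges E u)" using inc_fin[OF sg] .
    have gi: "\<forall>e\<in>inc_edges E u. g e = 1 \<or> g e = -1" using gv unfolding inc_edges_def by auto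
    note sp = sum_pm[OF fi gi]
    have "2 * int (card (Nn u)) = int (degree E u) + c u"
      using sp bal uV unfolding Nn_def degree_def by simp
    moreover have "mu u \<le> int (degree E u)" using mub uV by blast
    ultimately have "int (k u) \<le> int (card (Nn u))" using k2[OF uV] by linarith
    thus "k u \<le> card (Nn u)" by simp
  qed
  have ryV: "sv \<Longrightarrow> r \<in> V \<and> y \<in> V \<and> r \<noteq> y"
  proof -
    assume sv
    hence "{r,y} \<in> E" using sav by blast
    then obtain a b where "{r,y} = {a,b}" "a \<noteq> b" "a \<in> V" "b \<in> V" using sg_edge[OF sg] by metis
    thus "r \<in> V \<and> y \<in> V \<and> r \<noteq> y" by (metis doubleton_eq_iff)
  qed
  have ex: "\<forall>u\<in>V. \<exists>X. X \<subseteq> Nn u \<and> card X = k u \<and> (sv \<and> u \<in> {r,y} \<longrightarrow> {r,y} \<in> X)"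
  proof
    fix u assume uV: "u \<in> V"
    have finN: "finite (Nn u)" using inc_fin[OF sg] unfolding Nn_def by auto
    show "\<exists>X. X \<subseteq> Nn u \<and> card X = k u \<and> (sv \<and> u \<in> {r,y} \<longrightarrow> {r,y} \<in> X)"
    proof (cases "sv \<and> u \<in> {r,y}")
      case False
      obtain X where "X \<subseteq> Nn u" "card X = k u" using obtain_subset_with_card_n[OF kle[OF uV]] by metis
      thus ?thesis using False by blast
    next
      case True
      have ryN: "{r,y} \<in> Nn u" using True sav unfolding Nn_def inc_edges_def by auto
      have k1: "1 \<le> k u" using k2[OF uV] True sav by auto
      have "k u - 1 \<le> card (Nn u - {{r,y}})" using kle[OF uV] ryN finN by (simp add: card_Diff_singleton)
      then obtain Y where Y: "Y \<subseteq> Nn u - {{r,y}}" "card Y = k u - 1" "finite Y"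
        using obtain_subset_with_card_n by metis
      have "{r,y} \<notin> Y" using Y by auto
      hence "card (insert {r,y} Y) = k u" using Y k1 by simp
      moreover have "insert {r,y} Y \<subseteq> Nn u" using Y ryN by auto
      ultimately show ?thesis by blast
    qed
  qed
  then obtain Mf where Mf: "\<forall>u\<in>V. Mf u \<subseteq> Nn u \<and> card (Mf u) = k u \<and> (sv \<and> u \<in> {r,y} \<longrightarrow> {r,y} \<in> Mf u)"
    using bchoice[OF ex] by blast
  define M where "M = (\<Union>u\<in>V. Mf u)"
  have MN: "\<forall>e\<in>M. e \<in> E \<and> g e = -1" using Mf unfolding M_def Nn_def inc_edges_def by fastforce
  have finM: "finite M" using MN finE by (meson finite_subset subsetI)
  define f where "f e = (if e \<in> M then 1 else g e)" for e
  have fval: "\<forall>e\<in>E. f e = 1 \<or> f e = -1" using gv unfolding f_def by auto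
  have fv_ge: "\<And>u. u \<in> V \<Longrightarrow> mu u \<le> fv E f u"
  proof -
    fix u assume uV: "u \<in> V"
    have fi: "finite (inc_edges E u)" using inc_fin[OF sg] .
    have "fv E f u = (\<Sum>e\<in>inc_edges E u. g e + (if e \<in> M then 2 else 0))"
      unfolding fv_def f_def by (rule sum.cong) (use MN in auto)
    also have "\<dots> = (\<Sum>e\<in>inc_edges E u. g e) + 2 * int (card (inc_edges E u \<inter> M))"
      using fi by (simp add: sum.distrib sum.If_cases)
    finally have eq: "fv E f u = - c u + 2 * int (card (inc_edges E u \<inter> M))" using bal uV by simp
    have "Mf u \<subseteq> inc_edges E u \<inter> M" using Mf uV unfolding M_def Nn_def by auto
    hence "k u \<le> card (inc_edges E u \<inter> M)" using Mf uV fi by (metis card_mono finite_Int)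
    thus "mu u \<le> fv E f u" using eq k2[OF uV] by linarith
  qed
  have S0: "SEDF0 V E f"
    unfolding SEDF0_def signed_edge_fun_def
  proof (intro conjI ballI allI impI)
    fix e assume "e \<in> E" thus "f e = 1 \<or> f e = -1" using fval by auto
  next
    fix v assume "v \<in> V" thus "0 \<le> fv E f v" using fv_ge mub by fastforce
  next
    fix u v assume H: "{u, v} \<in> E \<and> f {u, v} = 1"
    then obtain a b where ab: "{u,v} = {a,b}" "a \<noteq> b" "a \<in> V" "b \<in> V" using sg_edge[OF sg] by metis
    have uv: "u \<in> V" "v \<in> V" using ab by (metis doubleton_eq_iff)+
    have "\<And>x. x \<in> {u,v} \<Longrightarrow> 0 < degree E x"
    proof -
      fix x assume "x \<in> {u,v}"
      hence "{u,v} \<in> inc_edges E x" using H unfolding inc_edges_def by auto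
      thus "0 < degree E x" unfolding degree_def using inc_fin[OF sg] by (metis card_gt_0_iff empty_iff)
    qed
    hence "1 \<le> fv E f u" "1 \<le> fv E f v" using fv_ge uv mub by (meson insertCI order_trans)+
    thus "2 \<le> fv E f u + fv E f v" by simp
  qed
  have sumf: "fG E f = (\<Sum>e\<in>E. g e) + 2 * int (card M)"
  proof -
    have "fG E f = (\<Sum>e\<in>E. g e + (if e \<in> M then 2 else 0))"
      unfolding fG_def f_def by (rule sum.cong) (use MN in auto)
    also have "\<dots> = (\<Sum>e\<in>E. g e) + 2 * int (card (E \<inter> M))"
      using finE by (simp add: sum.distrib sum.If_cases)
    also have "E \<inter> M = M" using MN by auto
    finally show ?thesis .
  qed
  have hs: "2 * (\<Sum>e\<in>E. g e) = - (\<Sum>u\<in>V. c u)"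
  proof -
    have "(\<Sum>u\<in>V. \<Sum>e\<in>inc_edges E u. g e) = (\<Sum>u\<in>V. - c u)" using bal by (intro sum.cong) auto
    thus ?thesis using handshake[OF sg, of g] by (simp add: sum_negf)
  qed
  have cardM0: "card M + (if sv then 1 else 0) \<le> (\<Sum>u\<in>V. k u)"
  proof (cases sv)
    case False
    have "card M \<le> (\<Sum>u\<in>V. card (Mf u))" unfolding M_def by (rule card_UN_le[OF finV])
    also have "\<dots> = (\<Sum>u\<in>V. k u)" using Mf by (intro sum.cong) auto
    finally show ?thesis using False by simp
  next
    case True
    note ry = ryV[OF True]
    define A where "A = (\<Union>u\<in>V - {y}. Mf u)"
    have MA: "M = A \<union> Mf y" unfolding M_def A_def using ry by auto
    have finA: "finite A" using finM MA by auto
    have finMy: "finite (Mf y)" using finM MA by auto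
    have "{r,y} \<in> A \<inter> Mf y" using Mf ry True unfolding A_def by auto
    hence "card (A \<inter> Mf y) \<ge> 1" using finA by (metis One_nat_def Suc_leI card_gt_0_iff empty_iff finite_Int)
    moreover have "card M + card (A \<inter> Mf y) = card A + card (Mf y)"
      unfolding MA by (rule card_Un_Int[OF finA finMy, symmetric])
    moreover have "card A \<le> (\<Sum>u\<in>V - {y}. card (Mf u))" unfolding A_def by (rule card_UN_le) (use finV in auto)
    moreover have "(\<Sum>u\<in>V. card (Mf u)) = (\<Sum>u\<in>V - {y}. card (Mf u)) + card (Mf y)"
      using finV ry by (metis add.commute sum.remove)
    moreover have "(\<Sum>u\<in>V. card (Mf u)) = (\<Sum>u\<in>V. k u)" using Mf by (intro sum.cong) auto
    ultimately have "card M + 1 \<le> (\<Sum>u\<in>V. k u)" by linarith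
    thus ?thesis using True by simp
  qed
  have cardM: "int (card M) + (if sv then 1 else 0) \<le> (\<Sum>u\<in>V. int (k u))"
  proof -
    have "int (card M + (if sv then 1 else 0)) \<le> int (\<Sum>u\<in>V. k u)" using cardM0 by linarith
    thus ?thesis by (simp add: of_nat_sum split: if_splits)
  qed
  have ksum: "2 * (\<Sum>u\<in>V. int (k u)) = (\<Sum>u\<in>V. mu u) + (\<Sum>u\<in>V. c u)"
    using k2 by (simp add: sum_distrib_left sum.distrib[symmetric])
  have "2 * fG E f \<le> 2 * ((\<Sum>u\<in>V. mu u) - (if sv then 2 else 0))"
  proof (cases sv)
    case True
    hence "int (card M) + 1 \<le> (\<Sum>u\<in>V. int (k u))" using cardM by simp
    moreover have "2 * fG E f = - (\<Sum>u\<in>V. c u) + 4 * int (card M)" using sumf hs by simp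
    ultimately have "2 * fG E f \<le> 2 * ((\<Sum>u\<in>V. mu u) - 2)" using ksum tot by (smt (verit))
    thus ?thesis using True by simp
  next
    case False
    hence "int (card M) \<le> (\<Sum>u\<in>V. int (k u))" using cardM by simp
    moreover have "2 * fG E f = - (\<Sum>u\<in>V. c u) + 4 * int (card M)" using sumf hs by simp
    ultimately have "2 * fG E f \<le> 2 * ((\<Sum>u\<in>V. mu u))" using ksum tot by (smt (verit))
    thus ?thesis using False by simp
  qed
  hence "fG E f \<le> (\<Sum>u\<in>V. mu u) - (if sv then 2 else 0)" by simp
  thus ?thesis using S0 by blast
qed




lemma sum_pm_bounds:
  assumes "finite A" "\<forall>e\<in>A. g e = 1 \<or> g e = (-1::int)"
  shows "- int (card A) \<le> (\<Sum>e\<in>A. g e) \<and> even (int (card A) + (\<Sum>e\<in>A. g e))"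
proof -
  note s = sum_pm[OF assms]
  have "int (card A) + (\<Sum>e\<in>A. g e) = 2 * int (card {e\<in>A. g e = 1})" using s by simp
  thus ?thesis using s by simp
qed

definition W0 :: "'a set \<Rightarrow> 'a set set \<Rightarrow> ('a \<times> bool) set" where
  "W0 V E = {(u,b). u \<in> V \<and> 0 < degree E u \<and> (b = False \<or> even (degree E u))}"
definition mu0 :: "'a set \<Rightarrow> 'a set set \<Rightarrow> 'a \<Rightarrow> int" where
  "mu0 V E u = (if u \<in> V \<and> 0 < degree E u then (if even (degree E u) then 2 else 1) else 0)"
definition E0 :: "'a set \<Rightarrow> 'a set set \<Rightarrow> ('a set + 'a \<times> bool) set" where
  "E0 V E = Inl ` E \<union> Inr ` W0 V E"
definition ends0 :: "('a set + 'a \<times> bool) \<Rightarrow> 'a option set" where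
  "ends0 x = (case x of Inl e \<Rightarrow> Some ` e | Inr p \<Rightarrow> {None, Some (fst p)})"

lemma ends0_simps[simp]: "ends0 (Inl e) = Some ` e" "ends0 (Inr p) = {None, Some (fst p)}"
  by (auto simp: ends0_def)

lemma finW0: "simple_graph V E \<Longrightarrow> finite (W0 V E)"
proof -
  assume sg: "simple_graph V E"
  have "finite V" using sg unfolding simple_graph_def by (rule conjunct1)
  moreover have "W0 V E \<subseteq> V \<times> UNIV" unfolding W0_def by auto
  moreover have "finite (V \<times> (UNIV::bool set))" using \<open>finite V\<close> by simp
  ultimately show ?thesis by (meson finite_subset)
qed

lemma finE0: "simple_graph V E \<Longrightarrow> finite (E0 V E)"
  unfolding E0_def using finW0 sg_finE by blast

lemma inc_Some: "{x\<in>E0 V E. Some u \<in> ends0 x} = Inl ` inc_edges E u \<union> Inr ` ((\<lambda>b. (u,b)) ` {b. (u,b) \<in> W0 V E})"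
  unfolding E0_def inc_edges_def by (auto simp: image_iff)

lemma inc_None: "{x\<in>E0 V E. None \<in> ends0 x} = Inr ` W0 V E"
  unfolding E0_def by auto

lemma card_B: "card {b. (u,b) \<in> W0 V E} = nat (mu0 V E u)"
proof -
  have "{b. (u,b) \<in> W0 V E} = (if u \<in> V \<and> 0 < degree E u then (if even (degree E u) then {False, True} else {False}) else {})"
    unfolding W0_def by auto
  thus ?thesis unfolding mu0_def by auto
qed

lemma sum_Some:
  assumes sg: "simple_graph V E"
  shows "(\<Sum>x\<in>{x\<in>E0 V E. Some u \<in> ends0 x}. L x) = (\<Sum>e\<in>inc_edges E u. L (Inl e)) + (\<Sum>b\<in>{b. (u,b) \<in> W0 V E}. L (Inr (u,b)))"
proof -
  have f1: "finite (inc_edges E u)" using inc_fin[OF sg] .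
  have f2: "finite {b. (u,b) \<in> W0 V E}" by simp
  have "(\<Sum>x\<in>{x\<in>E0 V E. Some u \<in> ends0 x}. L x) = (\<Sum>x\<in>Inl ` inc_edges E u. L x) + (\<Sum>x\<in>Inr ` ((\<lambda>b. (u,b)) ` {b. (u,b) \<in> W0 V E}). L x)"
    unfolding inc_Some by (rule sum.union_disjoint) (use f1 f2 in auto)
  also have "(\<Sum>x\<in>Inl ` inc_edges E u. L x) = (\<Sum>e\<in>inc_edges E u. L (Inl e))"
    by (simp add: sum.reindex)
  also have "(\<Sum>x\<in>Inr ` ((\<lambda>b. (u,b)) ` {b. (u,b) \<in> W0 V E}). L x) = (\<Sum>b\<in>{b. (u,b) \<in> W0 V E}. L (Inr (u,b)))"
    by (simp add: sum.reindex inj_on_def)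
  finally show ?thesis .
qed

lemma sum_None:
  assumes sg: "simple_graph V E"
  shows "(\<Sum>x\<in>{x\<in>E0 V E. None \<in> ends0 x}. L x) = (\<Sum>u\<in>V. \<Sum>b\<in>{b. (u,b) \<in> W0 V E}. L (Inr (u,b)))"
proof -
  have finV: "finite V" using sg unfolding simple_graph_def by (rule conjunct1)
  have "(\<Sum>x\<in>{x\<in>E0 V E. None \<in> ends0 x}. L x) = (\<Sum>p\<in>W0 V E. L (Inr p))"
    unfolding inc_None by (simp add: sum.reindex)
  also have "W0 V E = Sigma V (\<lambda>u. {b. (u,b) \<in> W0 V E})" unfolding W0_def by auto
  also have "(\<Sum>p\<in>Sigma V (\<lambda>u. {b. (u,b) \<in> W0 V E}). L (Inr p)) = (\<Sum>u\<in>V. \<Sum>b\<in>{b. (u,b) \<in> W0 V E}. L (Inr (u,b)))"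
  proof -
    have "(\<Sum>u\<in>V. \<Sum>b\<in>{b. (u,b) \<in> W0 V E}. L (Inr (u,b))) = (\<Sum>(u,b)\<in>Sigma V (\<lambda>u. {b. (u,b) \<in> W0 V E}). L (Inr (u,b)))"
      by (rule sum.Sigma) (use finV in auto)
    thus ?thesis by (simp add: split_def)
  qed
  finally show ?thesis .
qed

lemma from_balanced:
  fixes V :: "'a set" and E :: "'a set set" and L :: "('a set + 'a \<times> bool) \<Rightarrow> int"
  assumes sg: "simple_graph V E"
    and Lv: "\<forall>x\<in>E0 V E. L x = 1 \<or> L x = -1"
    and bal: "\<forall>u\<in>V. (\<Sum>x\<in>{x\<in>E0 V E. Some u \<in> ends0 x}. L x) = 0"
    and tot: "(\<Sum>x\<in>{x\<in>E0 V E. None \<in> ends0 x}. L x) \<le> 0"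
    and sav: "sv \<longrightarrow> {r,y} \<in> E \<and> L (Inl {r,y}) = -1
       \<and> 2 \<le> mu0 V E r + (\<Sum>b\<in>{b. (r,b) \<in> W0 V E}. L (Inr (r,b)))
       \<and> 2 \<le> mu0 V E y + (\<Sum>b\<in>{b. (y,b) \<in> W0 V E}. L (Inr (y,b)))"
  shows "\<exists>f. SEDF0 V E f \<and> fG E f \<le> (\<Sum>u\<in>V. mu0 V E u) - (if sv then 2 else 0)"
proof -
  define c where "c u = (\<Sum>b\<in>{b. (u,b) \<in> W0 V E}. L (Inr (u,b)))" for u
  define g where "g e = L (Inl e)" for e
  show ?thesis
  proof (rule assemble[OF sg, of g c "mu0 V E" sv r y])
    show "\<forall>e\<in>E. g e = 1 \<or> g e = -1" using Lv unfolding g_def E0_def by auto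
    show "\<forall>u\<in>V. (\<Sum>e\<in>inc_edges E u. g e) = - c u"
      using bal sum_Some[OF sg, where L=L] unfolding g_def c_def by (simp add: eq_neg_iff_add_eq_0)
    show "\<forall>u\<in>V. 0 \<le> mu0 V E u \<and> mu0 V E u \<le> int (degree E u) \<and> (0 < degree E u \<longrightarrow> 1 \<le> mu0 V E u)"
    proof
      fix u assume "u \<in> V"
      show "0 \<le> mu0 V E u \<and> mu0 V E u \<le> int (degree E u) \<and> (0 < degree E u \<longrightarrow> 1 \<le> mu0 V E u)"
        unfolding mu0_def using \<open>u \<in> V\<close> by (cases "degree E u"; auto; presburger)
    qed
    show "\<forall>u\<in>V. - mu0 V E u \<le> c u \<and> even (mu0 V E u + c u)"
    proof
      fix u assume uV: "u \<in> V"
      have vals: "\<forall>b\<in>{b. (u,b) \<in> W0 V E}. L (Inr (u,b)) = 1 \<or> L (Inr (u,b)) = -1"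
        using Lv unfolding E0_def by auto
      have cm: "int (card {b. (u,b) \<in> W0 V E}) = mu0 V E u" unfolding card_B mu0_def by auto
      show "- mu0 V E u \<le> c u \<and> even (mu0 V E u + c u)"
        using sum_pm_bounds[OF _ vals] cm unfolding c_def by simp
    qed
    show "(\<Sum>u\<in>V. c u) \<le> 0" using tot sum_None[OF sg, where L=L] unfolding c_def by simp
    show "sv \<longrightarrow> {r,y} \<in> E \<and> g {r,y} = -1 \<and> 2 \<le> mu0 V E r + c r \<and> 2 \<le> mu0 V E y + c y"
      using sav unfolding g_def c_def by simp
  qed
qed

lemma deg_notV: assumes sg: "simple_graph V E" "u \<notin> V" shows "degree E u = 0"
proof -
  have "inc_edges E u = {}"
  proof (rule ccontr)
    assume "inc_edges E u \<noteq> {}"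
    then obtain e where "e \<in> E" "u \<in> e" unfolding inc_edges_def by auto
    then obtain a b where "e = {a,b}" "a \<in> V" "b \<in> V" using sg_edge[OF sg(1)] by metis
    thus False using \<open>u \<in> e\<close> sg(2) by auto
  qed
  thus ?thesis unfolding degree_def by simp
qed

lemma card_ends0: assumes sg: "simple_graph V E" and x: "x \<in> E0 V E" shows "card (ends0 x) = 2"
proof (cases x)
  case (Inl e)
  hence "e \<in> E" using x unfolding E0_def by auto
  then obtain a b where "e = {a,b}" "a \<noteq> b" using sg_edge[OF sg] by metis
  thus ?thesis using Inl by simp
next
  case (Inr p) thus ?thesis by simp
qed

lemma mdeg_Some: fixes V :: "'a set" and E :: "'a set set" and u :: 'a
  assumes sg: "simple_graph V E"
  shows "mdeg (E0 V E) ends0 (Some u) = degree E u + nat (mu0 V E u)"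
proof -
  have "mdeg (E0 V E) ends0 (Some u) = card (Inl ` inc_edges E u \<union> Inr ` ((\<lambda>b. (u,b)) ` {b. (u,b) \<in> W0 V E}))"
    unfolding mdeg_def inc_Some ..
  also have "\<dots> = card (Inl ` inc_edges E u :: ('a set + 'a \<times> bool) set) + card (Inr ` ((\<lambda>b. (u,b)) ` {b. (u,b) \<in> W0 V E}) :: ('a set + 'a \<times> bool) set)"
  proof -
    have fa: "finite (Inl ` inc_edges E u :: ('a set + 'a \<times> bool) set)" using inc_fin[OF sg] by simp
    have fb: "finite (Inr ` ((\<lambda>b. (u,b)) ` {b. (u,b) \<in> W0 V E}) :: ('a set + 'a \<times> bool) set)" by simp
    have di: "(Inl ` inc_edges E u :: ('a set + 'a \<times> bool) set) \<inter> Inr ` ((\<lambda>b. (u,b)) ` {b. (u,b) \<in> W0 V E}) = {}" by auto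
    show ?thesis using fa fb di by (simp add: card_Un_disjoint)
  qed
  also have "\<dots> = degree E u + card {b. (u,b) \<in> W0 V E}"
    unfolding degree_def by (simp add: card_image inj_on_def)
  finally show ?thesis using card_B by metis
qed

lemma even_mdeg_Some: assumes sg: "simple_graph V E" shows "even (mdeg (E0 V E) ends0 (Some u))"
proof (cases "u \<in> V")
  case True
  then show ?thesis unfolding mdeg_Some[OF sg] mu0_def by auto
next
  case False
  then show ?thesis unfolding mdeg_Some[OF sg] mu0_def using deg_notV[OF sg False] by simp
qed

lemma Some_reach0:
  assumes sg: "simple_graph V E" and "Inr (u, b) \<in> F" "\<forall>x\<in>F. x \<in> E0 V E"
  shows "Some u \<in> mreach F ends0 None"
proof -
  have "None \<in> mreach F ends0 None" by (rule mreach_refl)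
  thus ?thesis by (rule mreach_step[OF _ assms(2)]) auto
qed

lemma inc_pos: assumes sg: "simple_graph V E" and "e \<in> E" "u \<in> e" shows "0 < degree E u"
proof -
  have "e \<in> inc_edges E u" using assms unfolding inc_edges_def by auto
  moreover have "finite (inc_edges E u)" by (rule inc_fin[OF sg])
  ultimately show ?thesis unfolding degree_def by (metis card_gt_0_iff empty_iff)
qed

lemma choose_sign:
  assumes "\<forall>x\<in>A. l x = 1 \<or> l x = (-1::int)" "\<forall>v. v \<noteq> w \<longrightarrow> (\<Sum>x\<in>{x\<in>A. v \<in> ends x}. l x) = 0"
  shows "\<exists>l'::_\<Rightarrow>int. (\<forall>x\<in>A. l' x = 1 \<or> l' x = -1) \<and> (\<forall>v. v \<noteq> w \<longrightarrow> (\<Sum>x\<in>{x\<in>A. v \<in> ends x}. l' x) = 0)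
     \<and> (\<Sum>x\<in>{x\<in>A. w \<in> ends x}. l' x) \<le> 0"
proof (cases "(\<Sum>x\<in>{x\<in>A. w \<in> ends x}. l x) \<le> 0")
  case True then show ?thesis using assms by (intro exI[of _ l] conjI) auto
next
  case False
  show ?thesis
    by (rule exI[of _ "\<lambda>x. - l x"]) (use assms False in \<open>auto simp: sum_negf\<close>)
qed

lemma case_nosave:
  fixes V :: "'a set" and E :: "'a set set"
  assumes sg: "simple_graph V E"
  shows "\<exists>f. SEDF0 V E f \<and> fG E f \<le> (\<Sum>u\<in>V. mu0 V E u)"
proof -
  have rc: "\<forall>x\<in>E0 V E. ends0 x \<subseteq> mreach (E0 V E) ends0 None"
  proof (intro ballI subsetI)
    fix x z assume x: "x \<in> E0 V E" and z: "z \<in> ends0 x"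
    show "z \<in> mreach (E0 V E) ends0 None"
    proof (cases x)
      case (Inr p)
      then show ?thesis using z Some_reach0[OF sg, of "fst p" "snd p" "E0 V E"] x mreach_refl by auto
    next
      case (Inl e)
      hence eE: "e \<in> E" using x unfolding E0_def by auto
      then obtain a b where ab: "e = {a,b}" "a \<in> V" using sg_edge[OF sg] by metis
      have "(a, False) \<in> W0 V E" using ab eE inc_pos[OF sg eE, of a] unfolding W0_def by auto
      hence "Inr (a, False) \<in> E0 V E" unfolding E0_def by auto
      hence "Some a \<in> mreach (E0 V E) ends0 None" using Some_reach0[OF sg] by blast
      moreover have "Some a \<in> ends0 x" using Inl ab by auto
      ultimately show ?thesis using mreach_step x z by fast
    qed
  qed
  have h2: "\<forall>x\<in>E0 V E. card (ends0 x) = 2" using card_ends0[OF sg] by blast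
  have h3: "\<forall>v. v \<noteq> None \<longrightarrow> even (mdeg (E0 V E) ends0 v)"
  proof (intro allI impI)
    fix v :: "'a option" assume "v \<noteq> None"
    then obtain u where "v = Some u" by auto
    thus "even (mdeg (E0 V E) ends0 v)" using even_mdeg_Some[OF sg] by simp
  qed
  obtain l :: "_ \<Rightarrow> int" where l: "(\<forall>x\<in>E0 V E. l x = 1 \<or> l x = -1) \<and>
    (\<forall>v. v \<noteq> None \<longrightarrow> (\<Sum>x\<in>{x\<in>E0 V E. v \<in> ends0 x}. l x) = 0)"
    using bll[OF finE0[OF sg] h2 h3 rc] by (rule exE)
  obtain L :: "_ \<Rightarrow> int" where L0: "(\<forall>x\<in>E0 V E. L x = 1 \<or> L x = -1) \<and> (\<forall>v. v \<noteq> None \<longrightarrow> (\<Sum>x\<in>{x\<in>E0 V E. v \<in> ends0 x}. L x) = 0)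
    \<and> (\<Sum>x\<in>{x\<in>E0 V E. None \<in> ends0 x}. L x) \<le> 0"
    using choose_sign[OF conjunct1[OF l] conjunct2[OF l]] by (rule exE)
  have L: "\<forall>x\<in>E0 V E. L x = 1 \<or> L x = -1" "\<forall>v. v \<noteq> None \<longrightarrow> (\<Sum>x\<in>{x\<in>E0 V E. v \<in> ends0 x}. L x) = 0"
     "(\<Sum>x\<in>{x\<in>E0 V E. None \<in> ends0 x}. L x) \<le> 0" using L0 by auto
  have "\<exists>f. SEDF0 V E f \<and> fG E f \<le> (\<Sum>u\<in>V. mu0 V E u) - (if False then 2 else 0)"
    by (rule from_balanced[OF sg L(1) _ L(3)]) (use L(2) in auto)
  thus ?thesis by simp
qed

lemma two_nbrs:
  assumes sg: "simple_graph V E" and r: "r \<in> V" "even (degree E r)" "0 < degree E r"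
  obtains y y2 where "{r,y} \<in> E" "{r,y2} \<in> E" "y \<noteq> y2" "y \<noteq> r" "y2 \<noteq> r"
proof -
  have "degree E r \<noteq> 1" using r(2) by auto
  hence "degree E r \<ge> 2" using r(3) by linarith
  hence "\<not> card (inc_edges E r) \<le> Suc 0" unfolding degree_def by simp
  then obtain e1 e2 where e: "e1 \<in> inc_edges E r" "e2 \<in> inc_edges E r" "e1 \<noteq> e2"
    using card_le_Suc0_iff_eq[of "inc_edges E r"] inc_fin[OF sg] by auto
  have "\<And>e. e \<in> inc_edges E r \<Longrightarrow> \<exists>z. e = {r,z} \<and> z \<noteq> r"
  proof -
    fix e assume "e \<in> inc_edges E r"
    hence eE: "e \<in> E" "r \<in> e" unfolding inc_edges_def by auto
    then obtain a b where "e = {a,b}" "a \<noteq> b" using sg_edge[OF sg] by metis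
    thus "\<exists>z. e = {r,z} \<and> z \<noteq> r" using eE by auto
  qed
  then obtain y y2 where "e1 = {r,y}" "y \<noteq> r" "e2 = {r,y2}" "y2 \<noteq> r" using e by metis
  moreover have "y \<noteq> y2" using calculation e by auto
  ultimately show ?thesis using that e unfolding inc_edges_def by auto
qed

lemma case_save:
  fixes V :: "'a set" and E :: "'a set set"
  assumes sg: "simple_graph V E" and r: "r \<in> V" "even (degree E r)" "0 < degree E r"
  shows "\<exists>f. SEDF0 V E f \<and> fG E f \<le> (\<Sum>u\<in>V. mu0 V E u) - 2"
proof -
  obtain y y2 where yy: "{r,y} \<in> E" "{r,y2} \<in> E" "y \<noteq> y2" "y \<noteq> r" "y2 \<noteq> r"
    using two_nbrs[OF sg r] by metis
  have yV: "y \<in> V" "y2 \<in> V"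
    using sg_edge[OF sg yy(1)] sg_edge[OF sg yy(2)] yy by (metis doubleton_eq_iff)+
  have ypos: "0 < degree E y" "0 < degree E y2" using inc_pos[OF sg yy(1)] inc_pos[OF sg yy(2)] by auto
  have ne1: "{r,y} \<noteq> {r,y2}" using yy by (metis doubleton_eq_iff)
  define Gad :: "('a set + 'a \<times> bool) set" where
    "Gad = {Inr (r,False), Inr (r,True), Inl {r,y}, Inl {r,y2}, Inr (y,False), Inr (y2,False)}"
  define gl :: "('a set + 'a \<times> bool) \<Rightarrow> int" where
    "gl x = (if x = Inr (r,False) then 1 else if x = Inr (r,True) then -1 else if x = Inl {r,y} then -1
       else if x = Inl {r,y2} then 1 else if x = Inr (y,False) then 1 else -1)" for x
  have GadE0: "Gad \<subseteq> E0 V E" unfolding Gad_def E0_def W0_def using r yy yV ypos by auto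
  define E1 where "E1 = E0 V E - Gad"
  have finE1: "finite E1" unfolding E1_def using finE0[OF sg] by simp
  have finGad: "finite Gad" unfolding Gad_def by simp
  have GS: "\<And>u. {x\<in>Gad. Some u \<in> ends0 x} =
      (if u = r then {Inr (r,False), Inr (r,True), Inl {r,y}, Inl {r,y2}}
       else if u = y then {Inl {r,y}, Inr (y,False)}
       else if u = y2 then {Inl {r,y2}, Inr (y2,False)} else {})"
    unfolding Gad_def using yy by auto
  have GN: "{x\<in>Gad. None \<in> ends0 x} = {Inr (r,False), Inr (r,True), Inr (y,False), Inr (y2,False)}"
    unfolding Gad_def by auto
  have gsumS: "\<And>u. (\<Sum>x\<in>{x\<in>Gad. Some u \<in> ends0 x}. gl x) = 0"
    unfolding GS gl_def using yy ne1 by auto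
  have gsumN: "(\<Sum>x\<in>{x\<in>Gad. None \<in> ends0 x}. gl x) = 0"
    unfolding GN gl_def using yy ne1 by auto
  have gcardS: "\<And>u. even (card {x\<in>Gad. Some u \<in> ends0 x})"
    unfolding GS using yy ne1 by auto
  have h2: "\<forall>x\<in>E1. card (ends0 x) = 2" using card_ends0[OF sg] unfolding E1_def by blast
  have h3: "\<forall>v. v \<noteq> None \<longrightarrow> even (mdeg E1 ends0 v)"
  proof (intro allI impI)
    fix v :: "'a option" assume "v \<noteq> None"
    then obtain u where v: "v = Some u" by auto
    have "{x\<in>E1. Some u \<in> ends0 x} = {x\<in>E0 V E. Some u \<in> ends0 x} - {x\<in>Gad. Some u \<in> ends0 x}"
      unfolding E1_def by auto
    moreover have "{x\<in>Gad. Some u \<in> ends0 x} \<subseteq> {x\<in>E0 V E. Some u \<in> ends0 x}" using GadE0 by auto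
    ultimately have "mdeg E1 ends0 (Some u) = mdeg (E0 V E) ends0 (Some u) - card {x\<in>Gad. Some u \<in> ends0 x}"
      unfolding mdeg_def using finGad by (simp add: card_Diff_subset)
    moreover have "card {x\<in>Gad. Some u \<in> ends0 x} \<le> mdeg (E0 V E) ends0 (Some u)"
      unfolding mdeg_def using GadE0 finE0[OF sg] by (intro card_mono) auto
    ultimately show "even (mdeg E1 ends0 v)" using v even_mdeg_Some[OF sg, of u] gcardS[of u]
      by (simp add: even_diff_nat)
  qed
  define R where "R = mreach E1 ends0 None"
  have RI: "\<And>u b. Inr (u,b) \<in> E1 \<Longrightarrow> Some u \<in> R"
    unfolding R_def by (rule Some_reach0[OF sg]) (auto simp: E1_def)
  have R2: "\<And>u. u \<in> V \<Longrightarrow> 0 < degree E u \<Longrightarrow> u \<notin> {r,y,y2} \<Longrightarrow> Some u \<in> R"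
  proof -
    fix u assume "u \<in> V" "0 < degree E u" "u \<notin> {r,y,y2}"
    hence "Inr (u, False) \<in> E1" unfolding E1_def E0_def W0_def Gad_def by auto
    thus "Some u \<in> R" by (rule RI)
  qed
  have Rstep: "\<And>e p q. e \<in> E \<Longrightarrow> e \<noteq> {r,y} \<Longrightarrow> e \<noteq> {r,y2} \<Longrightarrow> p \<in> e \<Longrightarrow> q \<in> e \<Longrightarrow> Some p \<in> R \<Longrightarrow> Some q \<in> R"
  proof -
    fix e p q assume H: "e \<in> E" "e \<noteq> {r,y}" "e \<noteq> {r,y2}" "p \<in> e" "q \<in> e" "Some p \<in> R"
    have "Inl e \<in> E1" using H unfolding E1_def E0_def Gad_def by auto
    thus "Some q \<in> R" using H mreach_step[of "Some p" E1 ends0 None "Inl e" "Some q"] unfolding R_def by auto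
  qed
  have Ry: "\<And>z z'. z \<in> {y,y2} \<Longrightarrow> z' \<in> {y, y2} \<Longrightarrow> z \<noteq> z' \<Longrightarrow> {z,z'} \<in> E \<Longrightarrow> Some z \<in> R"
  proof -
    fix z z' assume H: "z \<in> {y,y2}" "z' \<in> {y, y2}" "z \<noteq> z'" "{z,z'} \<in> E"
    have rz: "{r,z} \<in> E" using H yy by auto
    have zV: "z \<in> V" using H yV by auto
    show "Some z \<in> R"
    proof (cases "even (degree E z)")
      case True
      hence "Inr (z, True) \<in> E1" unfolding E1_def E0_def W0_def Gad_def using H zV ypos yy by auto
      thus ?thesis by (rule RI)
    next
      case False
      have sub: "{{r,z}, {z,z'}} \<subseteq> inc_edges E z" using rz H unfolding inc_edges_def by auto
      have "r \<notin> {z,z'}" using H yy by auto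
      hence ne: "{r,z} \<noteq> {z,z'}" by auto
      have "card {{r,z}, {z,z'}} = 2" using ne by simp
      hence "2 \<le> degree E z" unfolding degree_def using card_mono[OF inc_fin[OF sg] sub] by simp
      hence "3 \<le> degree E z" using False by presburger
      hence "\<not> card (inc_edges E z) \<le> card {{r,z}, {z,z'}}" using ne unfolding degree_def by simp
      hence "\<not> inc_edges E z \<subseteq> {{r,z}, {z,z'}}" using card_mono[of "{{r,z}, {z,z'}}"] by auto
      then obtain e' where e': "e' \<in> inc_edges E z" "e' \<noteq> {r,z}" "e' \<noteq> {z,z'}" by auto
      have e'E: "e' \<in> E" "z \<in> e'" using e' unfolding inc_edges_def by auto
      then obtain a b where ab: "e' = {a,b}" "a \<noteq> b" "a \<in> V" "b \<in> V" using sg_edge[OF sg] by metis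
      obtain w where w: "e' = {z,w}" "w \<noteq> z" "w \<in> V" using ab e'E by auto
      have wn: "w \<notin> {r,y,y2}" using w e' H by auto
      have "Some w \<in> R" using R2[OF w(3) inc_pos[OF sg e'E(1), of w] wn] w by auto
      moreover have "e' \<noteq> {r,y}" "e' \<noteq> {r,y2}" using w wn H yy by (auto simp: doubleton_eq_iff)
      ultimately show ?thesis using Rstep[OF e'E(1)] w by auto
    qed
  qed
  have rc: "\<forall>x\<in>E1. ends0 x \<subseteq> mreach E1 ends0 None"
  proof (intro ballI subsetI)
    fix x z assume x: "x \<in> E1" and z: "z \<in> ends0 x"
    show "z \<in> mreach E1 ends0 None"
    proof (cases x)
      case (Inr p)
      then show ?thesis using z RI[of "fst p" "snd p"] x mreach_refl unfolding R_def by auto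
    next
      case (Inl e)
      hence eE: "e \<in> E" and en: "e \<noteq> {r,y}" "e \<noteq> {r,y2}" using x unfolding E1_def E0_def Gad_def by auto
      then obtain a b where ab: "e = {a,b}" "a \<noteq> b" "a \<in> V" "b \<in> V" using sg_edge[OF sg] by metis
      have pa: "0 < degree E a" "0 < degree E b" using inc_pos[OF sg eE] ab by auto
      have "Some a \<in> R \<or> Some b \<in> R"
      proof (cases "a \<notin> {r,y,y2}")
        case True then show ?thesis using R2 ab pa by auto
      next
        case False
        show ?thesis
        proof (cases "b \<notin> {r,y,y2}")
          case True then show ?thesis using R2 ab pa by auto
        next
          case False
          hence "a \<in> {y,y2} \<and> b \<in> {y,y2}" using `\<not> a \<notin> {r,y,y2}` en ab by auto
          thus ?thesis using Ry[of a b] ab eE by auto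
        qed
      qed
      hence "Some a \<in> R" "Some b \<in> R" using Rstep[OF eE en] ab by auto
      thus ?thesis using z Inl ab unfolding R_def by auto
    qed
  qed
  obtain l :: "_ \<Rightarrow> int" where l: "(\<forall>x\<in>E1. l x = 1 \<or> l x = -1) \<and>
    (\<forall>v. v \<noteq> None \<longrightarrow> (\<Sum>x\<in>{x\<in>E1. v \<in> ends0 x}. l x) = 0)"
    using bll[OF finE1 h2 h3 rc] by (rule exE)
  obtain l1 :: "_ \<Rightarrow> int" where L0: "(\<forall>x\<in>E1. l1 x = 1 \<or> l1 x = -1) \<and> (\<forall>v. v \<noteq> None \<longrightarrow> (\<Sum>x\<in>{x\<in>E1. v \<in> ends0 x}. l1 x) = 0)
    \<and> (\<Sum>x\<in>{x\<in>E1. None \<in> ends0 x}. l1 x) \<le> 0"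
    using choose_sign[OF conjunct1[OF l] conjunct2[OF l]] by (rule exE)
  define L where "L x = (if x \<in> Gad then gl x else l1 x)" for x
  have split: "\<And>P. (\<Sum>x\<in>{x\<in>E0 V E. P x}. L x) = (\<Sum>x\<in>{x\<in>E1. P x}. l1 x) + (\<Sum>x\<in>{x\<in>Gad. P x}. gl x)"
  proof -
    fix P
    have "{x\<in>E0 V E. P x} = {x\<in>E1. P x} \<union> {x\<in>Gad. P x}" using GadE0 unfolding E1_def by auto
    moreover have "finite {x\<in>E1. P x}" "finite {x\<in>Gad. P x}" "{x\<in>E1. P x} \<inter> {x\<in>Gad. P x} = {}"
      using finE1 finGad unfolding E1_def by auto
    ultimately have "(\<Sum>x\<in>{x\<in>E0 V E. P x}. L x) = (\<Sum>x\<in>{x\<in>E1. P x}. L x) + (\<Sum>x\<in>{x\<in>Gad. P x}. L x)"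
      by (metis (no_types, lifting) sum.union_disjoint)
    moreover have "(\<Sum>x\<in>{x\<in>E1. P x}. L x) = (\<Sum>x\<in>{x\<in>E1. P x}. l1 x)"
      by (rule sum.cong) (auto simp: L_def E1_def)
    moreover have "(\<Sum>x\<in>{x\<in>Gad. P x}. L x) = (\<Sum>x\<in>{x\<in>Gad. P x}. gl x)"
      by (rule sum.cong) (auto simp: L_def)
    ultimately show "(\<Sum>x\<in>{x\<in>E0 V E. P x}. L x) = (\<Sum>x\<in>{x\<in>E1. P x}. l1 x) + (\<Sum>x\<in>{x\<in>Gad. P x}. gl x)" by simp
  qed
  have Lv: "\<forall>x\<in>E0 V E. L x = 1 \<or> L x = -1" using L0 unfolding L_def E1_def gl_def by auto
  have bal: "\<forall>u\<in>V. (\<Sum>x\<in>{x\<in>E0 V E. Some u \<in> ends0 x}. L x) = 0"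
    using split L0 gsumS by simp
  have tot: "(\<Sum>x\<in>{x\<in>E0 V E. None \<in> ends0 x}. L x) \<le> 0"
    using split[of "\<lambda>x. None \<in> ends0 x"] L0 gsumN by simp
  have Br: "{b. (r,b) \<in> W0 V E} = {False, True}" unfolding W0_def using r by auto
  have Lr: "L (Inr (r,False)) = 1" "L (Inr (r,True)) = -1" unfolding L_def gl_def Gad_def by auto
  have mur: "mu0 V E r = 2" unfolding mu0_def using r by auto
  have sr: "2 \<le> mu0 V E r + (\<Sum>b\<in>{b. (r,b) \<in> W0 V E}. L (Inr (r,b)))" unfolding Br mur using Lr by simp
  have Ly: "L (Inr (y,False)) = 1" unfolding L_def gl_def Gad_def using yy by auto
  have sy: "2 \<le> mu0 V E y + (\<Sum>b\<in>{b. (y,b) \<in> W0 V E}. L (Inr (y,b)))"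
  proof (cases "even (degree E y)")
    case True
    have By: "{b. (y,b) \<in> W0 V E} = {False, True}" unfolding W0_def using yV ypos True by auto
    have "Inr (y,True) \<in> E0 V E" unfolding E0_def using By by auto
    hence "L (Inr (y,True)) \<ge> -1" using Lv by force
    thus ?thesis unfolding By using Ly True yV ypos by (simp add: mu0_def)
  next
    case False
    have By: "{b. (y,b) \<in> W0 V E} = {False}" unfolding W0_def using yV ypos False by auto
    thus ?thesis unfolding By using Ly False yV ypos by (simp add: mu0_def)
  qed
  have Lry: "L (Inl {r,y}) = -1" unfolding L_def gl_def Gad_def using yy ne1 by auto
  have "\<exists>f. SEDF0 V E f \<and> fG E f \<le> (\<Sum>u\<in>V. mu0 V E u) - (if True then 2 else 0)"
    by (rule from_balanced[OF sg Lv bal tot]) (use yy Lry sr sy in auto)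
  thus ?thesis by simp
qed



lemma mu_bound:
  assumes sg: "simple_graph V E"
  shows "(\<Sum>u\<in>V. mu0 V E u) \<le> int (card V) + int (v_even V E)"
proof -
  have finV: "finite V" using sg unfolding simple_graph_def by (rule conjunct1)
  have "(\<Sum>u\<in>V. mu0 V E u) \<le> (\<Sum>u\<in>V. 1 + (if even (degree E u) then 1 else 0))"
    by (rule sum_mono) (auto simp: mu0_def)
  also have "\<dots> = int (card V) + (\<Sum>u\<in>V. (if even (degree E u) then 1 else 0))"
    by (simp add: sum.distrib)
  also have "(\<Sum>u\<in>V. (if even (degree E u) then 1 else 0)) = int (card {u\<in>V. even (degree E u)})"
    using finV by (simp add: sum.If_cases Int_def)
  finally show ?thesis unfolding v_even_def by simp
qed

lemma mu_bound2:
  assumes sg: "simple_graph V E" and no: "\<forall>u\<in>V. even (degree E u) \<longrightarrow> degree E u = 0"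
  shows "(\<Sum>u\<in>V. mu0 V E u) \<le> int (card V) - int (v_even V E)"
proof -
  have finV: "finite V" using sg unfolding simple_graph_def by (rule conjunct1)
  have "(\<Sum>u\<in>V. mu0 V E u) \<le> (\<Sum>u\<in>V. (if even (degree E u) then 0 else 1))"
    by (rule sum_mono) (use no in \<open>auto simp: mu0_def\<close>)
  also have "\<dots> = int (card {u\<in>V. odd (degree E u)})"
    using finV by (simp add: sum.If_cases Int_def)
  also have "card {u\<in>V. odd (degree E u)} = card V - v_even V E"
  proof -
    have "card V = card ({u\<in>V. odd (degree E u)} \<union> {u\<in>V. even (degree E u)})"
      by (rule arg_cong[where f=card]) auto
    also have "\<dots> = card {u\<in>V. odd (degree E u)} + card {u\<in>V. even (degree E u)}"
      by (rule card_Un_disjoint) (use finV in auto)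
    finally show ?thesis unfolding v_even_def by simp
  qed
  also have "int (card V - v_even V E) = int (card V) - int (v_even V E)"
  proof -
    have "v_even V E \<le> card V" unfolding v_even_def using finV by (intro card_mono) auto
    thus ?thesis by simp
  qed
  finally show ?thesis .
qed

lemma exists_good:
  assumes sg: "simple_graph V E" and pos: "v_even V E > 0"
  shows "\<exists>f. SEDF0 V E f \<and> fG E f \<le> int (card V) - 2 + int (v_even V E)"
proof (cases "\<exists>r\<in>V. even (degree E r) \<and> 0 < degree E r")
  case True
  then obtain r where r: "r \<in> V" "even (degree E r)" "0 < degree E r" by blast
  obtain f where f: "SEDF0 V E f" "fG E f \<le> (\<Sum>u\<in>V. mu0 V E u) - 2" using case_save[OF sg r] by blast
  thus ?thesis using mu_bound[OF sg] by force
next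
  case False
  hence no: "\<forall>u\<in>V. even (degree E u) \<longrightarrow> degree E u = 0" by auto
  obtain f where f: "SEDF0 V E f" "fG E f \<le> (\<Sum>u\<in>V. mu0 V E u)" using case_nosave[OF sg] by blast
  thus ?thesis using mu_bound2[OF sg no] pos by force
qed

lemma SEDF0_SEDF:
  assumes sg: "simple_graph V E" and f: "SEDF0 V E f"
  shows "SEDF E f"
  unfolding SEDF_def
proof (intro conjI allI impI)
  show "signed_edge_fun E f" using f unfolding SEDF0_def by blast
next
  fix u v assume uv: "{u, v} \<in> E"
  then obtain a b where ab: "{u,v} = {a,b}" "a \<noteq> b" "a \<in> V" "b \<in> V" using sg_edge[OF sg] by metis
  have uvne: "u \<noteq> v" using ab by auto
  have uvV: "u \<in> V" "v \<in> V" using ab by (metis doubleton_eq_iff)+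
  have I: "inc_edges E u \<inter> inc_edges E v = {{u,v}}"
  proof
    show "{{u,v}} \<subseteq> inc_edges E u \<inter> inc_edges E v" using uv unfolding inc_edges_def by auto
  next
    show "inc_edges E u \<inter> inc_edges E v \<subseteq> {{u,v}}"
    proof
      fix e assume "e \<in> inc_edges E u \<inter> inc_edges E v"
      hence e: "e \<in> E" "u \<in> e" "v \<in> e" unfolding inc_edges_def by auto
      then obtain p q where "e = {p,q}" "p \<noteq> q" using sg_edge[OF sg] by metis
      hence "e = {u,v}" using e uvne by auto
      thus "e \<in> {{u,v}}" by simp
    qed
  qed
  have fin: "finite (inc_edges E u)" "finite (inc_edges E v)" using inc_fin[OF sg] by auto
  have "(\<Sum>e\<in>inc_edges E u \<union> inc_edges E v. f e) + (\<Sum>e\<in>inc_edges E u \<inter> inc_edges E v. f e)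
      = fv E f u + fv E f v" unfolding fv_def by (rule sum.union_inter[OF fin])
  hence S: "(\<Sum>e\<in>inc_edges E u \<union> inc_edges E v. f e) = fv E f u + fv E f v - f {u,v}" using I by simp
  have "f {u,v} = 1 \<or> f {u,v} = -1" using f uv unfolding SEDF0_def signed_edge_fun_def by blast
  moreover have "f {u,v} = 1 \<Longrightarrow> fv E f u + fv E f v \<ge> 2" using f uv unfolding SEDF0_def by blast
  moreover have "fv E f u \<ge> 0" "fv E f v \<ge> 0" using f uvV unfolding SEDF0_def by blast+
  ultimately show "(\<Sum>e\<in>inc_edges E u \<union> inc_edges E v. f e) \<ge> 1" using S by auto
qed

lemma gamma_le:
  assumes sg: "simple_graph V E" and f: "SEDF0 V E f"
  shows "gamma_s' E \<le> fG E f"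
proof -
  have finE: "finite E" using sg_finE[OF sg] .
  have bnd: "\<And>g. SEDF E g \<Longrightarrow> \<bar>fG E g\<bar> \<le> int (card E)"
  proof -
    fix g assume "SEDF E g"
    hence gv: "\<forall>e\<in>E. g e = 1 \<or> g e = -1" unfolding SEDF_def signed_edge_fun_def by blast
    have "\<bar>fG E g\<bar> \<le> (\<Sum>e\<in>E. \<bar>g e\<bar>)" unfolding fG_def by (rule sum_abs)
    also have "\<dots> = (\<Sum>e\<in>E. 1)" using gv by (intro sum.cong) auto
    finally show "\<bar>fG E g\<bar> \<le> int (card E)" by simp
  qed
  have sub: "{fG E g | g. SEDF E g} \<subseteq> {- int (card E) .. int (card E)}"
    using bnd by fastforce
  have fin: "finite {fG E g | g. SEDF E g}" using sub finite_subset by blast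
  have mem: "fG E f \<in> {fG E g | g. SEDF E g}" using SEDF0_SEDF[OF sg f] by blast
  show ?thesis unfolding gamma_s'_def using Min_le[OF fin mem] .
qed

theorem proposition4p1:
  fixes V :: "'a set" and E :: "'a set set"
  assumes "simple_graph V E"
    and "v_even V E > 0"
  shows "(\<exists>f. SEDF0 V E f \<and> fG E f \<le> int (card V) - 2 + int (v_even V E))
         \<and> gamma_s' E \<le> int (card V) - 2 + int (v_even V E)"
proof -
  obtain f where f: "SEDF0 V E f" "fG E f \<le> int (card V) - 2 + int (v_even V E)"
    using exists_good[OF assms] by blast
  have "gamma_s' E \<le> fG E f" by (rule gamma_le[OF assms(1) f(1)])
  thus ?thesis using f by auto
qed


end
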